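(* For every $K\in\mathcal{S}_n$, \[K=\bigcap_{x\in\mathbb{R}^n}\bigl(x+\delta(\{x\},K)\,B_2^n\bigr).\]
   Context: $B_2^n$ is the closed Euclidean unit ball in $\mathbb{R}^n$; $\delta$ is the Hausdorff distance $\delta(K_0,K_1)=\inf\{\lambda>0: K_0\subseteq K_1+\lambda B_2^n,\ K_1\subseteq K_0+\lambda B_2^n\}$. $\mathcal{S}_n$ is the set of convex bodies (compact convex non-empty sets) in $\mathbb{R}^n$ which are intersections of Euclidean unit balls. *)

theory Defs
  imports "HOL-Analysis.Analysis"
begin

definition hausdorff_delta :: "'a::euclidean_space set \<Rightarrow> 'a set \<Rightarrow> real" where
  "hausdorff_delta K0 K1 = Inf {r. r > 0 \<and>
      K0 \<subseteq> {a + b | a b. a \<in> K1 \<and> b \<in> (\<lambda>v. r *\<^sub>R v) ` cball 0 1} \<and>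
      K1 \<subseteq> {a + b | a b. a \<in> K0 \<and> b \<in> (\<lambda>v. r *\<^sub>R v) ` cball 0 1}}"

definition convex_body :: "'a::euclidean_space set \<Rightarrow> bool" where
  "convex_body K \<longleftrightarrow> compact K \<and> convex K \<and> K \<noteq> {}"

definition S_sets :: "'a::euclidean_space set set" where
  "S_sets = {K. convex_body K \<and> (\<exists>C. K = (\<Inter>c\<in>C. cball c 1))}"

end

theory Submission
  imports Defs
begin

lemma mem_scaled:
  fixes x y :: "'a::euclidean_space"
  assumes r: "r \<ge> 0"
  shows "(y \<in> {x + b | b. b \<in> (\<lambda>v. r *\<^sub>R v) ` cball 0 1}) \<longleftrightarrow> dist x y \<le> r"
proof
  assume "y \<in> {x + b | b. b \<in> (\<lambda>v. r *\<^sub>R v) ` cball 0 1}"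
  then obtain v where v: "norm v \<le> 1" "y = x + r *\<^sub>R v" by auto
  have "dist x y = r * norm v" using v r by (simp add: dist_norm)
  also have "\<dots> \<le> r" using v r by (simp add: mult_left_le)
  finally show "dist x y \<le> r" .
next
  assume d: "dist x y \<le> r"
  show "y \<in> {x + b | b. b \<in> (\<lambda>v. r *\<^sub>R v) ` cball 0 1}"
  proof (cases "r = 0")
    case True
    then have "y = x" using d by simp
    have "(0::'a) \<in> (\<lambda>v. r *\<^sub>R v) ` cball 0 1" by (rule image_eqI[of _ _ 0]) auto
    then show ?thesis using \<open>y = x\<close> by force
  next
    case False
    then have rp: "r > 0" using r by simp
    define v where "v = (1/r) *\<^sub>R (y - x)"
    have "norm v \<le> 1" using d rp by (simp add: v_def dist_norm norm_minus_commute divide_le_eq)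
    moreover have "y = x + r *\<^sub>R v" using rp by (simp add: v_def)
    ultimately show ?thesis by auto
  qed
qed

lemma mem_scaled':
  fixes x y :: "'a::euclidean_space"
  assumes r: "r \<ge> 0"
  shows "(\<exists>b. y = x + b \<and> b \<in> (\<lambda>v. r *\<^sub>R v) ` cball 0 1) \<longleftrightarrow> dist x y \<le> r"
  using mem_scaled[OF r, of y x] by simp

lemma mem_scaled2:
  fixes x y :: "'a::euclidean_space"
  assumes r: "r \<ge> 0"
  shows "(y \<in> {a + b | a b. a \<in> {x} \<and> b \<in> (\<lambda>v. r *\<^sub>R v) ` cball 0 1}) \<longleftrightarrow> dist x y \<le> r"
  using mem_scaled[OF r, of y x] by auto

lemma mem_scaled3:
  fixes x y :: "'a::euclidean_space"
  assumes r: "r \<ge> 0"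
  shows "(x \<in> {a + b | a b. a \<in> K \<and> b \<in> (\<lambda>v. r *\<^sub>R v) ` cball 0 1}) \<longleftrightarrow> (\<exists>y\<in>K. dist x y \<le> r)"
proof -
  have "(x \<in> {a + b | a b. a \<in> K \<and> b \<in> (\<lambda>v. r *\<^sub>R v) ` cball 0 1}) \<longleftrightarrow>
        (\<exists>y\<in>K. x \<in> {y + b | b. b \<in> (\<lambda>v. r *\<^sub>R v) ` cball 0 1})" by blast
  also have "\<dots> \<longleftrightarrow> (\<exists>y\<in>K. dist x y \<le> r)" by (simp add: mem_scaled'[OF r] dist_commute)
  finally show ?thesis .
qed

theorem lemma13:
  fixes K :: "'a::euclidean_space set"
  assumes "K \<in> S_sets"
  shows "K = (\<Inter>x\<in>(UNIV::'a set). {x + b | b. b \<in> (\<lambda>v. hausdorff_delta {x} K *\<^sub>R v) ` cball 0 1})"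
proof -
  from assms obtain C where cb: "convex_body K" and KC: "K = (\<Inter>c\<in>C. cball c 1)"
    unfolding S_sets_def by auto
  have cK: "compact K" and neK: "K \<noteq> {}" using cb unfolding convex_body_def by auto
  define P where "P r L = {a + b | a b. a \<in> L \<and> b \<in> (\<lambda>v. r *\<^sub>R v) ` cball 0 1}" for r and L :: "'a set"
  define S where "S x = {r. r > 0 \<and> {x} \<subseteq> P r K \<and> K \<subseteq> P r {x}}" for x
  have hd: "hausdorff_delta {x} K = Inf (S x)" for x unfolding hausdorff_delta_def S_def P_def by simp
  have Sx: "r \<in> S x \<longleftrightarrow> r > 0 \<and> (\<exists>y\<in>K. dist x y \<le> r) \<and> (\<forall>y\<in>K. dist x y \<le> r)" for x r
  proof (cases "r > 0")
    case True
    have "r \<in> S x \<longleftrightarrow> x \<in> P r K \<and> (\<forall>y\<in>K. y \<in> P r {x})" using True unfolding S_def by auto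
    also have "\<dots> \<longleftrightarrow> (\<exists>y\<in>K. dist x y \<le> r) \<and> (\<forall>y\<in>K. dist x y \<le> r)"
      unfolding P_def using mem_scaled2[of r x] mem_scaled3[of r x K] True by (simp add: mem_scaled')
    finally show ?thesis using True by simp
  qed (simp add: S_def)
  have bdd: "bdd_below (S x)" for x unfolding bdd_below_def using Sx by (meson less_le)
  have ne: "S x \<noteq> {}" for x
  proof -
    obtain M where M: "\<forall>y\<in>K. dist x y \<le> M" using compact_imp_bounded[OF cK]
      unfolding bounded_def by (metis dist_commute dist_triangle order_trans add_le_cancel_left)
    hence "max M 1 \<in> S x" using neK Sx by (meson less_max_iff_disj max.coboundedI1 zero_less_one all_not_in_conv)
    thus ?thesis by auto
  qed
  have nn: "Inf (S x) \<ge> 0" for x using ne Sx by (meson cInf_greatest less_le)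
  have up: "dist x y \<le> Inf (S x)" if "y \<in> K" for x y
    using ne that Sx by (meson cInf_greatest)
  show ?thesis
  proof (rule set_eqI)
    fix y
    have "y \<in> (\<Inter>x\<in>(UNIV::'a set). {x + b | b. b \<in> (\<lambda>v. hausdorff_delta {x} K *\<^sub>R v) ` cball 0 1})
          \<longleftrightarrow> (\<forall>x. dist x y \<le> Inf (S x))" using hd by (simp add: mem_scaled'[OF nn])
    moreover have "(\<forall>x. dist x y \<le> Inf (S x)) \<Longrightarrow> y \<in> K"
    proof -
      assume a: "\<forall>x. dist x y \<le> Inf (S x)"
      have "y \<in> cball c 1" if "c \<in> C" for c
      proof -
        have sub: "\<forall>z\<in>K. dist c z \<le> 1" using KC that by auto
        then have "\<exists>z\<in>K. dist c z \<le> 1" using neK by blast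
        then have "1 \<in> S c" using Sx sub by simp
        hence "Inf (S c) \<le> 1" using bdd by (rule cInf_lower)
        thus ?thesis using a by (meson mem_cball order_trans)
      qed
      thus "y \<in> K" using KC by auto
    qed
    ultimately show "y \<in> K \<longleftrightarrow> y \<in> (\<Inter>x\<in>(UNIV::'a set). {x + b | b. b \<in> (\<lambda>v. hausdorff_delta {x} K *\<^sub>R v) ` cball 0 1})"
      using up by blast
  qed
qed

end
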